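(* Fix probability distributions $P$ and $Q$ on a common measurable space. Then the function $\gamma\mapsto D_{\infty,\gamma}(P,Q)$ is non-decreasing on $\gamma>0$.
   Context: The Tsallis $\gamma$-logarithm is $\log_\gamma(x)=\log x$ if $\gamma=1$ and $\log_\gamma(x)=\frac{x^{1-\gamma}-1}{1-\gamma}$ if $\gamma\ne1$, for $x\ge0$. The Tsallis $\gamma$-max-divergence is $D_{\infty,\gamma}(P,Q)=\sup_B\log_\gamma(P(B))-\log_\gamma(Q(B))$, supremum over measurable sets $B$. *)

theory Defs
  imports "HOL-Probability.Probability"
begin

text \<open>Tsallis gamma-logarithm on [0,inf), with values in the extended reals.
  At x = 0 we take the limit value: log 0 = -inf (gamma = 1),
  0 powr (1 - gamma) = +inf for gamma > 1 (hence value -inf), and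
  value -1/(1-gamma) for gamma < 1.\<close>
definition tsallis_log :: "real \<Rightarrow> real \<Rightarrow> ereal" where
  "tsallis_log \<gamma> x =
     (if x = 0 then (if \<gamma> < 1 then ereal (- 1 / (1 - \<gamma>)) else - \<infinity>)
      else if \<gamma> = 1 then ereal (ln x)
      else ereal ((x powr (1 - \<gamma>) - 1) / (1 - \<gamma>)))"

text \<open>Difference of extended reals with the convention (-inf) - (-inf) = -inf
  (the Isabelle default would give +inf).\<close>
definition tsallis_minus :: "ereal \<Rightarrow> ereal \<Rightarrow> ereal" where
  "tsallis_minus a b = (if a = - \<infinity> then - \<infinity> else a - b)"

definition tsallis_max_div :: "real \<Rightarrow> 'a measure \<Rightarrow> 'a measure \<Rightarrow> ereal" where
  "tsallis_max_div \<gamma> P Q =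
     (SUP B \<in> sets P. tsallis_minus (tsallis_log \<gamma> (measure P B)) (tsallis_log \<gamma> (measure Q B)))"

end

theory Submission
  imports Defs
begin

definition LL :: "real \<Rightarrow> real \<Rightarrow> real" where
  "LL g x = (if g = 1 then ln x else (x powr (1 - g) - 1) / (1 - g))"

lemma tl_pos: "x > 0 \<Longrightarrow> tsallis_log g x = ereal (LL g x)"
  by (simp add: tsallis_log_def LL_def)

lemma LL_deriv: "x > 0 \<Longrightarrow> DERIV (LL g) x :> x powr (- g)"
proof (cases "g = 1")
  case True
  assume x: "x > 0"
  have "DERIV ln x :> 1 / x" using x by (auto intro!: derivative_eq_intros)
  moreover have "x powr (- g) = 1 / x" using True x by (simp add: powr_minus divide_inverse)
  ultimately show ?thesis using True by (simp add: LL_def[abs_def])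
next
  case False
  assume x: "x > 0"
  have "DERIV (\<lambda>x. (x powr (1 - g) - 1) / (1 - g)) x :> ((1-g) * x powr (1 - g - 1) - 0) / (1 - g)"
    by (rule DERIV_cdivide[OF DERIV_diff[OF has_real_derivative_powr[OF x] DERIV_const]])
  moreover have "((1-g) * x powr (1 - g - 1) - 0) / (1 - g) = x powr (- g)" using False by simp
  ultimately show ?thesis using False by (simp add: LL_def[abs_def])
qed

lemma LL_mono: assumes "0 < a" "a \<le> b" shows "LL g a \<le> LL g b"
proof (rule DERIV_nonneg_imp_nondecreasing[of a b])
  fix x assume "a \<le> x"
  then have "x > 0" using assms by auto
  then show "\<exists>y. DERIV (LL g) x :> y \<and> y \<ge> 0"
    by (intro exI[of _ "x powr (- g)"] conjI LL_deriv) auto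
qed (rule assms(2))

lemma LL_diff_mono:
  assumes "0 < a" "a \<le> b" "b \<le> 1" "g1 \<le> g2"
  shows "LL g2 a - LL g1 a \<le> LL g2 b - LL g1 b"
proof (rule DERIV_nonneg_imp_nondecreasing[of a b, where f = "\<lambda>x. LL g2 x - LL g1 x"])
  fix x assume "a \<le> x" "x \<le> b"
  then have x: "0 < x" "x \<le> 1" using assms by auto
  show "\<exists>y. DERIV (\<lambda>x. LL g2 x - LL g1 x) x :> y \<and> y \<ge> 0"
    using x assms by (intro exI[of _ "x powr (- g2) - x powr (- g1)"])
       (auto intro!: derivative_intros LL_deriv powr_mono')
qed (use assms in auto)

lemma pointwise:
  fixes p q g1 g2 :: real
  assumes p: "0 \<le> p" "p \<le> 1" and q: "0 \<le> q" "q \<le> 1" and g: "0 < g1" "g1 \<le> g2"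
  shows "tsallis_minus (tsallis_log g1 p) (tsallis_log g1 q)
     \<le> max 0 (tsallis_minus (tsallis_log g2 p) (tsallis_log g2 q))"
proof (cases "p = 0")
  case True
  show ?thesis
  proof (cases "g1 < 1")
    case g1: True
    show ?thesis
    proof (cases "q = 0")
      case True then show ?thesis using \<open>p = 0\<close> g1 by (simp add: tsallis_log_def tsallis_minus_def)
    next
      case False
      then have "q > 0" using q by auto
      have "- 1 / (1 - g1) - (q powr (1 - g1) - 1) / (1 - g1) \<le> 0"
        using g1 by (simp add: field_simps)
      then have "tsallis_minus (tsallis_log g1 p) (tsallis_log g1 q) \<le> 0"
        using \<open>p = 0\<close> g1 \<open>q > 0\<close>
        by (simp add: tsallis_log_def tsallis_minus_def)
      then show ?thesis by (rule order_trans[OF _ max.cobounded1])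
    qed
  next
    case False then show ?thesis using True by (simp add: tsallis_log_def tsallis_minus_def)
  qed
next
  case False
  then have pp: "p > 0" using p by auto
  show ?thesis
  proof (cases "q = 0")
    case q0: True
    show ?thesis
    proof (cases "g2 < 1")
      case g2: True
      then have g1: "g1 < 1" using g by auto
      have "p powr (1 - g1) \<le> p powr (1 - g2)" using g p by (intro powr_mono') auto
      moreover have "p powr (1-g2) / (1-g1) \<le> p powr (1 - g2) / (1 - g2)"
        using g g2 by (intro divide_left_mono) auto
      ultimately have "p powr (1 - g1) / (1 - g1) \<le> p powr (1 - g2) / (1 - g2)"
        using g1 by (meson divide_right_mono less_eq_real_def order_trans diff_gt_0_iff_gt)
      then have "(p powr (1 - g1) - 1) / (1 - g1) - - 1 / (1 - g1)
          \<le> (p powr (1 - g2) - 1) / (1 - g2) - - 1 / (1 - g2)"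
        by (simp add: diff_divide_distrib)
      then show ?thesis using q0 pp g1 g2
        by (simp add: tsallis_log_def tsallis_minus_def le_max_iff_disj)
    next
      case False
      then show ?thesis using q0 pp
        by (simp add: tsallis_log_def tsallis_minus_def le_max_iff_disj)
    qed
  next
    case False
    then have qq: "q > 0" using q by auto
    show ?thesis
    proof (cases "p \<le> q")
      case True
      have "LL g1 p - LL g1 q \<le> 0" using LL_mono[OF pp True] by simp
      then have "tsallis_minus (tsallis_log g1 p) (tsallis_log g1 q) \<le> 0"
        using pp qq by (simp add: tl_pos tsallis_minus_def)
      then show ?thesis by (rule order_trans[OF _ max.cobounded1])
    next
      case False
      have "LL g2 q - LL g1 q \<le> LL g2 p - LL g1 p"
        using LL_diff_mono[of q p g1 g2] qq False p g by auto
      then show ?thesis using pp qq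
        by (simp add: tl_pos tsallis_minus_def le_max_iff_disj)
    qed
  qed
qed

theorem proposition2:
  fixes P Q :: "'a measure"
  assumes "prob_space P" and "prob_space Q" and "sets P = sets Q"
  shows "\<forall>\<gamma>1 \<gamma>2. 0 < \<gamma>1 \<longrightarrow> \<gamma>1 \<le> \<gamma>2 \<longrightarrow>
           tsallis_max_div \<gamma>1 P Q \<le> tsallis_max_div \<gamma>2 P Q"
proof (intro allI impI)
  fix g1 g2 :: real assume g: "0 < g1" "g1 \<le> g2"
  interpret P: prob_space P by fact
  interpret Q: prob_space Q by fact
  have sp: "space P = space Q" using assms(3) by (rule sets_eq_imp_space_eq)
  let ?F = "\<lambda>g B. tsallis_minus (tsallis_log g (measure P B)) (tsallis_log g (measure Q B))"
  have m: "measure P (space P) = 1" "measure Q (space P) = 1"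
    using P.prob_space Q.prob_space sp by auto
  have "?F g2 (space P) = 0"
    using m by (simp add: tsallis_log_def tsallis_minus_def)
  moreover have "?F g2 (space P) \<le> tsallis_max_div g2 P Q"
    unfolding tsallis_max_div_def by (rule SUP_upper) simp
  ultimately have zero: "0 \<le> tsallis_max_div g2 P Q" by simp
  show "tsallis_max_div g1 P Q \<le> tsallis_max_div g2 P Q"
    unfolding tsallis_max_div_def
  proof (rule SUP_least)
    fix B assume B: "B \<in> sets P"
    have "?F g1 B \<le> max 0 (?F g2 B)"
      by (rule pointwise) (use g in simp_all)
    also have "\<dots> \<le> tsallis_max_div g2 P Q"
    proof (rule max.boundedI[OF zero])
      show "?F g2 B \<le> tsallis_max_div g2 P Q"
        unfolding tsallis_max_div_def using B by (rule SUP_upper)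
    qed
    finally show "?F g1 B \<le> (SUP B\<in>sets P. ?F g2 B)" unfolding tsallis_max_div_def .
  qed
qed

end
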